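(* Let $\succeq$ be an inconsistency ranking on $\mathcal{A}$. Then $\succeq$ satisfies positive responsiveness (PR), invariance under inversion of preferences (IIP), homogeneous treatment of entities (HTE), scale invariance (SI), monotonicity (MON) and reducibility (RED) if and only if $\succeq$ equals the Koczkodaj inconsistency ranking $\succeq^K$. In other words, $\succeq^K$ satisfies all six properties, and it is the unique inconsistency ranking on $\mathcal{A}$ that does so.
   Context: A pairwise comparison matrix of size $n$ is a matrix $\mathbf{A}=[a_{ij}]\in\mathbb{R}^{n\times n}$ with all entries positive and $a_{ji}=1/a_{ij}$ for all $i,j$. Let $\mathcal{A}$ denote the set of all pairwise comparison matrices of all sizes $n\ge 3$. For $\mathbf{A}\in\mathcal{A}$ of size $n$ and $3\le m\le n$, a submatrix of $\mathbf{A}$ is a matrix $\mathbf{B}=[b_{ij}]$ of size $m$ with $b_{ij}=a_{\sigma(i)\sigma(j)}$ for some strictly increasing map $\sigma:\{1,\dots,m\}\to\{1,\dots,n\}$. A triad is a pairwise comparison matrix of size $3$; a triad of $\mathbf{A}$ is a submatrix of $\mathbf{A}$ of size $3$ (when $n=3$, $\mathbf{A}$ is its own unique triad). A triad $\mathbf{T}$ is written $\mathbf{T}=(t_1;t_2;t_3)$, meaning $t_{12}=t_1$, $t_{13}=t_2$, $t_{23}=t_3$ (the remaining entries are determined by reciprocity); $\mathbf{T}^\top$ denotes its transpose, i.e. the triad $(1/t_1;1/t_2;1/t_3)$. An inconsistency ranking is a complete and transitive binary relation $\succeq$ on $\mathcal{A}$ ($\mathbf{A}\succeq\mathbf{B}$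 is read "$\mathbf{A}$ is at most as inconsistent as $\mathbf{B}$"); $\mathbf{A}\sim\mathbf{B}$ means $\mathbf{A}\succeq\mathbf{B}$ and $\mathbf{B}\succeq\mathbf{A}$; $\mathbf{A}\succ\mathbf{B}$ means $\mathbf{A}\succeq\mathbf{B}$ and not $\mathbf{B}\succeq\mathbf{A}$; $\mathbf{A}\preceq\mathbf{B}$ means $\mathbf{B}\succeq\mathbf{A}$. For $\mathbf{A}=[a_{ij}]\in\mathcal{A}$ of size $n$ let $\mu(\mathbf{A})=\max_{1\le i<j<k\le n}\max\{a_{ij}a_{jk}/a_{ik},\ a_{ik}/(a_{ij}a_{jk})\}$. The Koczkodaj inconsistency ranking $\succeq^K$ is defined by $\mathbf{A}\succeq^K\mathbf{B}\iff\mu(\mathbf{A})\le\mu(\mathbf{B})$. Properties of an inconsistency ranking $\succeq$: (PR) for all $s_2,t_2\ge 1$: $(1;s_2;1)\succeq(1;t_2;1)\iff s_2\le t_2$. (IIP) $\mathbf{T}\sim\mathbf{T}^\top$ for every triad $\mathbf{T}$. (HTE) $(1;t_2;t_3)\sim(1;t_2/t_3;1)$ for all $t_2,t_3>0$. (SI) $(t_1;t_2;t_3)\sim(kt_1;k^2t_2;kt_3)$ for all $t_1,t_2,t_3>0$ and all $k>0$. (MON) $\mathbf{A}\preceq\mathbf{T}$ for every $\mathbf{A}\in\mathcal{A}$ and every triad $\mathbf{T}$ of $\mathbf{A}$. (RED) every $\mathbf{A}\in\mathcal{A}$ has a triad $\mathbf{T}$ with $\mathbf{A}\sim\mathbf{T}$.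 *)

theory Defs
  imports Complex_Main
begin

text \<open>A matrix of size n is represented as a pair (n, a) with a :: nat => nat => real;
  indices are 0-based (0..n-1); entries outside the index range are fixed to 0
  so that the representation is canonical.\<close>
type_synonym pcm = "nat \<times> (nat \<Rightarrow> nat \<Rightarrow> real)"

definition is_pcm :: "pcm \<Rightarrow> bool" where
  "is_pcm A \<longleftrightarrow> (let n = fst A; a = snd A in
     n \<ge> 3 \<and>
     (\<forall>i<n. \<forall>j<n. a i j > 0 \<and> a j i = 1 / a i j) \<and>
     (\<forall>i j. \<not> (i < n \<and> j < n) \<longrightarrow> a i j = 0))"

definition PCMs :: "pcm set" where
  "PCMs = {A. is_pcm A}"

definition triad :: "real \<Rightarrow> real \<Rightarrow> real \<Rightarrow> pcm" where
  "triad t1 t2 t3 = (3, (\<lambda>i j.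
     if i = 0 \<and> j = 0 then 1 else if i = 1 \<and> j = 1 then 1 else if i = 2 \<and> j = 2 then 1
     else if i = 0 \<and> j = 1 then t1 else if i = 1 \<and> j = 0 then 1 / t1
     else if i = 0 \<and> j = 2 then t2 else if i = 2 \<and> j = 0 then 1 / t2
     else if i = 1 \<and> j = 2 then t3 else if i = 2 \<and> j = 1 then 1 / t3
     else 0))"

definition submatrix :: "pcm \<Rightarrow> nat \<Rightarrow> (nat \<Rightarrow> nat) \<Rightarrow> pcm" where
  "submatrix A m \<sigma> = (m, (\<lambda>i j. if i < m \<and> j < m then snd A (\<sigma> i) (\<sigma> j) else 0))"

definition is_submatrix :: "pcm \<Rightarrow> pcm \<Rightarrow> bool" where
  "is_submatrix B A \<longleftrightarrow> (\<exists>m \<sigma>. 3 \<le> m \<and> m \<le> fst A \<and>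
      strict_mono_on {0..<m} \<sigma> \<and> (\<forall>i<m. \<sigma> i < fst A) \<and> B = submatrix A m \<sigma>)"

definition is_triad_of :: "pcm \<Rightarrow> pcm \<Rightarrow> bool" where
  "is_triad_of T A \<longleftrightarrow> is_submatrix T A \<and> fst T = 3"

definition kocz_mu :: "pcm \<Rightarrow> real" where
  "kocz_mu A = (let n = fst A; a = snd A in
     Max {max (a i j * a j k / a i k) (a i k / (a i j * a j k)) | i j k. i < j \<and> j < k \<and> k < n})"

definition koczkodaj_ranking :: "pcm \<Rightarrow> pcm \<Rightarrow> bool" where
  "koczkodaj_ranking A B \<longleftrightarrow> kocz_mu A \<le> kocz_mu B"

text \<open>An inconsistency ranking: complete and transitive relation on the set of PCMs.
  R A B reads "A is at most as inconsistent as B".\<close>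
definition inconsistency_ranking :: "(pcm \<Rightarrow> pcm \<Rightarrow> bool) \<Rightarrow> bool" where
  "inconsistency_ranking R \<longleftrightarrow>
     (\<forall>A\<in>PCMs. \<forall>B\<in>PCMs. R A B \<or> R B A) \<and>
     (\<forall>A\<in>PCMs. \<forall>B\<in>PCMs. \<forall>C\<in>PCMs. R A B \<longrightarrow> R B C \<longrightarrow> R A C)"

definition indiff :: "(pcm \<Rightarrow> pcm \<Rightarrow> bool) \<Rightarrow> pcm \<Rightarrow> pcm \<Rightarrow> bool" where
  "indiff R A B \<longleftrightarrow> R A B \<and> R B A"

definition prop_PR :: "(pcm \<Rightarrow> pcm \<Rightarrow> bool) \<Rightarrow> bool" where
  "prop_PR R \<longleftrightarrow> (\<forall>s2 t2::real. s2 \<ge> 1 \<longrightarrow> t2 \<ge> 1 \<longrightarrow>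
     (R (triad 1 s2 1) (triad 1 t2 1) \<longleftrightarrow> s2 \<le> t2))"

definition prop_IIP :: "(pcm \<Rightarrow> pcm \<Rightarrow> bool) \<Rightarrow> bool" where
  "prop_IIP R \<longleftrightarrow> (\<forall>t1 t2 t3::real. t1 > 0 \<longrightarrow> t2 > 0 \<longrightarrow> t3 > 0 \<longrightarrow>
     indiff R (triad t1 t2 t3) (triad (1/t1) (1/t2) (1/t3)))"

definition prop_HTE :: "(pcm \<Rightarrow> pcm \<Rightarrow> bool) \<Rightarrow> bool" where
  "prop_HTE R \<longleftrightarrow> (\<forall>t2 t3::real. t2 > 0 \<longrightarrow> t3 > 0 \<longrightarrow>
     indiff R (triad 1 t2 t3) (triad 1 (t2/t3) 1))"

definition prop_SI :: "(pcm \<Rightarrow> pcm \<Rightarrow> bool) \<Rightarrow> bool" where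
  "prop_SI R \<longleftrightarrow> (\<forall>t1 t2 t3 k::real. t1 > 0 \<longrightarrow> t2 > 0 \<longrightarrow> t3 > 0 \<longrightarrow> k > 0 \<longrightarrow>
     indiff R (triad t1 t2 t3) (triad (k*t1) (k^2*t2) (k*t3)))"

definition prop_MON :: "(pcm \<Rightarrow> pcm \<Rightarrow> bool) \<Rightarrow> bool" where
  "prop_MON R \<longleftrightarrow> (\<forall>A\<in>PCMs. \<forall>T. is_triad_of T A \<longrightarrow> R T A)"

definition prop_RED :: "(pcm \<Rightarrow> pcm \<Rightarrow> bool) \<Rightarrow> bool" where
  "prop_RED R \<longleftrightarrow> (\<forall>A\<in>PCMs. \<exists>T. is_triad_of T A \<and> indiff R A T)"

end

theory Submission imports Defs begin

definition kv :: "(nat \<Rightarrow> nat \<Rightarrow> real) \<Rightarrow> nat \<Rightarrow> nat \<Rightarrow> nat \<Rightarrow> real" where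
  "kv a i j k = max (a i j * a j k / a i k) (a i k / (a i j * a j k))"

lemma mu_set: "{max (a i j * a j k / a i k) (a i k / (a i j * a j k)) | i j k. i < j \<and> j < k \<and> k < n}
   = (\<lambda>(i,j,k). kv a i j k) ` {p \<in> {..<n}\<times>{..<n}\<times>{..<n}. fst p < fst (snd p) \<and> fst (snd p) < snd (snd p)}"
proof (rule set_eqI, rule iffI)
  fix x assume "x \<in> {max (a i j * a j k / a i k) (a i k / (a i j * a j k)) | i j k. i < j \<and> j < k \<and> k < n}"
  then obtain i j k where "i < j" "j < k" "k < n" "x = kv a i j k" unfolding kv_def by blast
  then show "x \<in> (\<lambda>(i,j,k). kv a i j k) ` {p \<in> {..<n}\<times>{..<n}\<times>{..<n}. fst p < fst (snd p) \<and> fst (snd p) < snd (snd p)}"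
    by (intro image_eqI[of _ _ "(i,j,k)"]) auto
next
  fix x assume "x \<in> (\<lambda>(i,j,k). kv a i j k) ` {p \<in> {..<n}\<times>{..<n}\<times>{..<n}. fst p < fst (snd p) \<and> fst (snd p) < snd (snd p)}"
  then obtain i j k where "i < j" "j < k" "k < n" "x = kv a i j k" by auto
  then show "x \<in> {max (a i j * a j k / a i k) (a i k / (a i j * a j k)) | i j k. i < j \<and> j < k \<and> k < n}"
    unfolding kv_def by blast
qed

lemma mu_def2: "kocz_mu A = Max ((\<lambda>(i,j,k). kv (snd A) i j k) ` {p \<in> {..<fst A}\<times>{..<fst A}\<times>{..<fst A}. fst p < fst (snd p) \<and> fst (snd p) < snd (snd p)})"
  unfolding kocz_mu_def Let_def mu_set ..

lemma finS: "finite {p \<in> {..<n}\<times>{..<n}\<times>{..<(n::nat)}. fst p < fst (snd p) \<and> fst (snd p) < snd (snd p)}"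
  by (rule finite_subset[of _ "{..<n}\<times>{..<n}\<times>{..<n}"]) auto

lemma mu_ge: "i < j \<Longrightarrow> j < k \<Longrightarrow> k < fst A \<Longrightarrow> kv (snd A) i j k \<le> kocz_mu A"
  unfolding mu_def2 by (rule Max_ge) (auto simp: finS intro!: image_eqI[of _ _ "(i,j,k)"])

lemma mu_attained: "fst A \<ge> 3 \<Longrightarrow> \<exists>i j k. i < j \<and> j < k \<and> k < fst A \<and> kocz_mu A = kv (snd A) i j k"
proof -
  assume "fst A \<ge> 3"
  let ?S = "{p \<in> {..<fst A}\<times>{..<fst A}\<times>{..<fst A}. fst p < fst (snd p) \<and> fst (snd p) < snd (snd p)}"
  have "(0,1,2) \<in> ?S" using \<open>fst A \<ge> 3\<close> by auto
  hence "kocz_mu A \<in> (\<lambda>(i,j,k). kv (snd A) i j k) ` ?S"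
    unfolding mu_def2 by (intro Max_in finite_imageI finS) blast
  then obtain i j k where "(i,j,k) \<in> ?S" "kocz_mu A = kv (snd A) i j k" by (auto simp del: mem_Collect_eq)
  then show ?thesis by (intro exI[of _ i] exI[of _ j] exI[of _ k]) simp
qed

lemma mu3: "fst A = 3 \<Longrightarrow> kocz_mu A = kv (snd A) 0 1 2"
proof -
  assume h: "fst A = 3"
  obtain i j k where "i < j \<and> j < k \<and> k < fst A \<and> kocz_mu A = kv (snd A) i j k"
    using mu_attained[of A] h by auto
  moreover have "\<And>i j k. i < j \<and> j < k \<and> k < (3::nat) \<Longrightarrow> i = 0 \<and> j = 1 \<and> k = 2" by arith
  ultimately show ?thesis using h by metis
qed

lemma mu_triad: "kocz_mu (triad t1 t2 t3) = max (t1*t3/t2) (t2/(t1*t3))"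
  by (subst mu3) (auto simp: triad_def kv_def)

lemma triad_pcm: "t1 > 0 \<Longrightarrow> t2 > 0 \<Longrightarrow> t3 > 0 \<Longrightarrow> triad t1 t2 t3 \<in> PCMs"
  unfolding PCMs_def is_pcm_def triad_def Let_def
  by (auto simp: less_Suc_eq numeral_3_eq_3)

lemma pcm3: assumes "A \<in> PCMs" "fst A = 3"
  shows "A = triad (snd A 0 1) (snd A 0 2) (snd A 1 2) \<and> snd A 0 1 > 0 \<and> snd A 0 2 > 0 \<and> snd A 1 2 > 0"
proof -
  obtain a where A: "A = (3, a)" using assms(2) by (cases A) auto
  have P: "\<forall>i<3. \<forall>j<3. a i j > 0 \<and> a j i = 1 / a i j" and Z: "\<forall>i j. \<not> (i < 3 \<and> j < 3) \<longrightarrow> a i j = 0"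
    using assms(1) unfolding A PCMs_def is_pcm_def Let_def mem_Collect_eq fst_conv snd_conv by blast+
  have d: "a i i = 1" if "i < 3" for i
  proof -
    have p: "a i i > 0" "a i i = 1 / a i i" using P that by blast+
    hence "a i i * a i i = 1" by (metis less_irrefl nonzero_eq_divide_eq)
    hence "(a i i - 1) * (a i i + 1) = 0" by algebra
    with p(1) show ?thesis by simp
  qed
  have ae: "a = snd (triad (a 0 1) (a 0 2) (a 1 2))"
  proof (intro ext)
    fix i j
    show "a i j = snd (triad (a 0 1) (a 0 2) (a 1 2)) i j"
    proof (cases "i < 3 \<and> j < 3")
      case True
      then have "i \<in> {0,1,2}" "j \<in> {0,1,2}" by auto
      have r: "a 1 0 = 1 / a 0 1" "a 2 0 = 1 / a 0 2" "a 2 1 = 1 / a 1 2"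
        using P[rule_format, of 0 1] P[rule_format, of 0 2] P[rule_format, of 1 2] by simp_all
      from \<open>i \<in> {0,1,2}\<close> \<open>j \<in> {0,1,2}\<close> show ?thesis using d r unfolding triad_def by auto
    next
      case False
      then show ?thesis using Z unfolding triad_def by auto
    qed
  qed
  moreover have "a 0 1 > 0" "a 0 2 > 0" "a 1 2 > 0"
    using P[rule_format, of 0 1] P[rule_format, of 0 2] P[rule_format, of 1 2] by simp_all
  moreover have "(3, a) = triad (a 0 1) (a 0 2) (a 1 2)"
  proof (rule prod_eqI)
    show "fst (3::nat, a) = fst (triad (a 0 1) (a 0 2) (a 1 2))" by (simp add: triad_def)
    show "snd (3::nat, a) = snd (triad (a 0 1) (a 0 2) (a 1 2))" using ae by (simp only: snd_conv)
  qed
  ultimately show ?thesis unfolding A by simp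
qed

lemma triad_of_props:
  assumes "A \<in> PCMs" "is_triad_of T A"
  obtains i j k where "i < j" "j < k" "k < fst A" "T \<in> PCMs" "kocz_mu T = kv (snd A) i j k"
proof -
  obtain \<sigma> where s: "strict_mono_on {0..<3} \<sigma>" "\<forall>i<3. \<sigma> i < fst A" "T = submatrix A 3 \<sigma>"
    using assms(2) unfolding is_triad_of_def is_submatrix_def by (auto simp: submatrix_def)
  have o: "\<sigma> 0 < \<sigma> 1" "\<sigma> 1 < \<sigma> 2" using s(1) by (auto intro: strict_mono_onD)
  have P: "\<forall>i<fst A. \<forall>j<fst A. snd A i j > 0 \<and> snd A j i = 1 / snd A i j"
    using assms(1) unfolding PCMs_def is_pcm_def Let_def mem_Collect_eq by blast
  have "T \<in> PCMs" unfolding s(3) PCMs_def is_pcm_def Let_def submatrix_def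
  proof (simp, intro allI impI conjI)
    fix i j :: nat assume "i < 3" "j < 3"
    then have "\<sigma> i < fst A" "\<sigma> j < fst A" using s(2) by auto
    then show "snd A (\<sigma> i) (\<sigma> j) > 0" "snd A (\<sigma> j) (\<sigma> i) = 1 / snd A (\<sigma> i) (\<sigma> j)"
      using P by blast+
  qed
  moreover have "kocz_mu T = kv (snd A) (\<sigma> 0) (\<sigma> 1) (\<sigma> 2)"
    by (subst mu3) (auto simp: s(3) submatrix_def kv_def)
  ultimately show ?thesis using that o s(2) by auto
qed

lemma kv_pos: "A \<in> PCMs \<Longrightarrow> i < j \<Longrightarrow> j < k \<Longrightarrow> k < fst A \<Longrightarrow> kv (snd A) i j k \<ge> 1"
proof -
  assume a: "A \<in> PCMs" "i < j" "j < k" "k < fst A"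
  have P: "\<forall>i<fst A. \<forall>j<fst A. snd A i j > 0"
    using a(1) unfolding PCMs_def is_pcm_def Let_def mem_Collect_eq by blast
  define x where "x = snd A i j * snd A j k / snd A i k"
  have "x > 0" unfolding x_def using P a by auto
  moreover have "kv (snd A) i j k = max x (1/x)" unfolding kv_def x_def by simp
  moreover have "max x (1/x) \<ge> 1" if "x > 0" for x :: real
  proof (cases "x \<ge> 1")
    case False then have "1/x \<ge> 1" using that by (simp add: field_simps)
    then show ?thesis by simp
  qed simp
  ultimately show ?thesis by simp
qed

lemma K_MON: "A \<in> PCMs \<Longrightarrow> is_triad_of T A \<Longrightarrow> kocz_mu T \<le> kocz_mu A"
  by (metis triad_of_props mu_ge)

lemma K_RED: assumes "A \<in> PCMs" shows "\<exists>T. is_triad_of T A \<and> kocz_mu T = kocz_mu A"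
proof -
  have "fst A \<ge> 3" using assms unfolding PCMs_def is_pcm_def Let_def mem_Collect_eq by blast
  then obtain i j k where ijk: "i < j" "j < k" "k < fst A" "kocz_mu A = kv (snd A) i j k"
    using mu_attained by blast
  define \<sigma> where "\<sigma> = (\<lambda>x::nat. if x = 0 then i else if x = 1 then j else k)"
  have sm: "strict_mono_on {0..<3} \<sigma>"
    unfolding strict_mono_on_def \<sigma>_def using ijk by auto
  have "is_triad_of (submatrix A 3 \<sigma>) A"
  proof -
    have bnd: "\<forall>x<3. \<sigma> x < fst A" using ijk by (auto simp: \<sigma>_def)
    show ?thesis unfolding is_triad_of_def is_submatrix_def using sm bnd \<open>fst A \<ge> 3\<close>
      by (auto simp: submatrix_def)
  qed
  moreover have "kocz_mu (submatrix A 3 \<sigma>) = kocz_mu A"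
    by (subst mu3) (auto simp: submatrix_def kv_def \<sigma>_def ijk(4))
  ultimately show ?thesis by blast
qed


lemma mu_ge1: "A \<in> PCMs \<Longrightarrow> kocz_mu A \<ge> 1"
proof -
  assume a: "A \<in> PCMs"
  have "fst A \<ge> 3" using a unfolding PCMs_def is_pcm_def Let_def mem_Collect_eq by blast
  then obtain i j k where "i < j" "j < k" "k < fst A" "kocz_mu A = kv (snd A) i j k"
    using mu_attained by blast
  then show ?thesis using kv_pos[OF a] by simp
qed

lemma indiff_trans: "inconsistency_ranking R \<Longrightarrow> A \<in> PCMs \<Longrightarrow> B \<in> PCMs \<Longrightarrow> C \<in> PCMs \<Longrightarrow>
   indiff R A B \<Longrightarrow> indiff R B C \<Longrightarrow> indiff R A C"
  unfolding inconsistency_ranking_def indiff_def by blast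

lemma maxinv: "(x::real) > 0 \<Longrightarrow> max (1/x) x = (if x \<ge> 1 then x else 1/x)"
proof (cases "x \<ge> 1")
  case True
  assume x: "x > 0"
  have "1/x \<le> 1" using True by simp
  then have "1/x \<le> x" using True by linarith
  then show ?thesis using True by (simp add: max_absorb2)
next
  case False
  assume x: "x > 0"
  have "1/x > 1" using False x by (simp add: field_simps)
  then show ?thesis using False by simp
qed

lemma canon:
  assumes r: "inconsistency_ranking R" and iip: "prop_IIP R" and hte: "prop_HTE R" and si: "prop_SI R"
    and p: "t1 > 0" "t2 > 0" "t3 > 0"
  shows "indiff R (triad t1 t2 t3) (triad 1 (kocz_mu (triad t1 t2 t3)) 1)"
proof -
  define x where "x = t2 / (t1 * t3)"
  have x0: "x > 0" using p unfolding x_def by simp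
  have e1': "indiff R (triad t1 t2 t3) (triad ((1/t1)*t1) ((1/t1)^2*t2) ((1/t1)*t3))"
  proof -
    have "1/t1 > 0" using p by simp
    then show ?thesis using si p unfolding prop_SI_def by blast
  qed
  have eq1: "triad ((1/t1)*t1) ((1/t1)^2*t2) ((1/t1)*t3) = triad 1 (t2/t1^2) (t3/t1)"
    using p by (simp add: field_simps power2_eq_square)
  have e1: "indiff R (triad t1 t2 t3) (triad 1 (t2/t1^2) (t3/t1))" using e1' eq1 by simp
  have e2': "indiff R (triad 1 (t2/t1^2) (t3/t1)) (triad 1 ((t2/t1^2)/(t3/t1)) 1)"
  proof -
    have "t2/t1^2 > 0" "t3/t1 > 0" using p by simp_all
    then show ?thesis using hte unfolding prop_HTE_def by blast
  qed
  have eq2: "(t2/t1^2)/(t3/t1) = x" unfolding x_def using p by (simp add: field_simps power2_eq_square)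
  have e2: "indiff R (triad 1 (t2/t1^2) (t3/t1)) (triad 1 x 1)" using e2' eq2 by simp
  have m: "kocz_mu (triad t1 t2 t3) = max (1/x) x"
    unfolding mu_triad x_def using p by (simp add: field_simps)
  have pc: "triad t1 t2 t3 \<in> PCMs" "triad 1 (t2/t1^2) (t3/t1) \<in> PCMs" "triad 1 x 1 \<in> PCMs"
    using p x0 by (auto intro!: triad_pcm)
  have e12: "indiff R (triad t1 t2 t3) (triad 1 x 1)" using indiff_trans[OF r pc e1 e2] .
  show ?thesis
  proof (cases "x \<ge> 1")
    case True
    then show ?thesis using e12 m maxinv[OF x0] by simp
  next
    case False
    have e3: "indiff R (triad 1 x 1) (triad 1 (1/x) 1)"
      using iip x0 unfolding prop_IIP_def by (metis div_by_1 zero_less_one)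
    have "indiff R (triad t1 t2 t3) (triad 1 (1/x) 1)"
      using indiff_trans[OF r pc(1) pc(3) triad_pcm e12 e3] x0 by simp
    then show ?thesis using False m maxinv[OF x0] by simp
  qed
qed

lemma key:
  assumes r: "inconsistency_ranking R" and pr: "prop_PR R" and iip: "prop_IIP R" and hte: "prop_HTE R"
    and si: "prop_SI R" and mon: "prop_MON R" and red: "prop_RED R" and A: "A \<in> PCMs"
  shows "indiff R A (triad 1 (kocz_mu A) 1)"
proof -
  have tr: "\<And>X Y Z. X \<in> PCMs \<Longrightarrow> Y \<in> PCMs \<Longrightarrow> Z \<in> PCMs \<Longrightarrow> R X Y \<Longrightarrow> R Y Z \<Longrightarrow> R X Z"
    using r unfolding inconsistency_ranking_def by blast
  have cn: "indiff R T (triad 1 (kocz_mu T) 1)" if "T \<in> PCMs" "fst T = 3" for T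
    using pcm3[OF that] canon[OF r iip hte si] by metis
  obtain T where T: "is_triad_of T A" "indiff R A T" using red A unfolding prop_RED_def by blast
  have TP: "T \<in> PCMs" and T3: "fst T = 3" using triad_of_props[OF A T(1)] T(1) unfolding is_triad_of_def by auto
  have le1: "kocz_mu T \<le> kocz_mu A" using K_MON[OF A T(1)] .
  obtain S where S: "is_triad_of S A" "kocz_mu S = kocz_mu A" using K_RED[OF A] by blast
  have SP: "S \<in> PCMs" and S3: "fst S = 3" using triad_of_props[OF A S(1)] S(1) unfolding is_triad_of_def by auto
  have RSA: "R S A" using mon A S(1) unfolding prop_MON_def by blast
  have cT: "indiff R T (triad 1 (kocz_mu T) 1)" using cn[OF TP T3] .
  have cS: "indiff R S (triad 1 (kocz_mu S) 1)" using cn[OF SP S3] .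
  have g: "kocz_mu T \<ge> 1" "kocz_mu S \<ge> 1" "kocz_mu A \<ge> 1" using mu_ge1 TP SP A by auto
  have P1: "triad 1 (kocz_mu T) 1 \<in> PCMs" "triad 1 (kocz_mu S) 1 \<in> PCMs" "triad 1 (kocz_mu A) 1 \<in> PCMs"
    using g by (auto intro!: triad_pcm)
  have "R (triad 1 (kocz_mu S) 1) (triad 1 (kocz_mu T) 1)"
  proof -
    have "R (triad 1 (kocz_mu S) 1) S" using cS unfolding indiff_def by blast
    moreover have "R A T" using T(2) unfolding indiff_def by blast
    moreover have "R T (triad 1 (kocz_mu T) 1)" using cT unfolding indiff_def by blast
    ultimately show ?thesis using tr RSA P1 SP TP A by meson
  qed
  then have "kocz_mu S \<le> kocz_mu T" using pr g unfolding prop_PR_def by blast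
  then have "kocz_mu T = kocz_mu A" using S(2) le1 by simp
  then show ?thesis using indiff_trans[OF r A TP P1(1) T(2) cT] by simp
qed

theorem theorem1:
  assumes "inconsistency_ranking R"
  shows "(prop_PR R \<and> prop_IIP R \<and> prop_HTE R \<and> prop_SI R \<and> prop_MON R \<and> prop_RED R)
         \<longleftrightarrow> (\<forall>A\<in>PCMs. \<forall>B\<in>PCMs. R A B \<longleftrightarrow> koczkodaj_ranking A B)"
proof
  assume props: "prop_PR R \<and> prop_IIP R \<and> prop_HTE R \<and> prop_SI R \<and> prop_MON R \<and> prop_RED R"
  have tr: "\<And>X Y Z. X \<in> PCMs \<Longrightarrow> Y \<in> PCMs \<Longrightarrow> Z \<in> PCMs \<Longrightarrow> R X Y \<Longrightarrow> R Y Z \<Longrightarrow> R X Z"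
    using assms unfolding inconsistency_ranking_def by blast
  show "\<forall>A\<in>PCMs. \<forall>B\<in>PCMs. R A B \<longleftrightarrow> koczkodaj_ranking A B"
  proof (intro ballI)
    fix A B assume A: "A \<in> PCMs" and B: "B \<in> PCMs"
    have kA: "indiff R A (triad 1 (kocz_mu A) 1)" using key[OF assms _ _ _ _ _ _ A] props by blast
    have kB: "indiff R B (triad 1 (kocz_mu B) 1)" using key[OF assms _ _ _ _ _ _ B] props by blast
    have g: "kocz_mu A \<ge> 1" "kocz_mu B \<ge> 1" using mu_ge1 A B by auto
    have P1: "triad 1 (kocz_mu A) 1 \<in> PCMs" "triad 1 (kocz_mu B) 1 \<in> PCMs"
      using g by (auto intro!: triad_pcm)
    have "R A B \<longleftrightarrow> R (triad 1 (kocz_mu A) 1) (triad 1 (kocz_mu B) 1)"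
      using tr[OF _ _ _] A B P1 kA kB unfolding indiff_def by meson
    also have "\<dots> \<longleftrightarrow> kocz_mu A \<le> kocz_mu B" using props g unfolding prop_PR_def by blast
    finally show "R A B \<longleftrightarrow> koczkodaj_ranking A B" unfolding koczkodaj_ranking_def .
  qed
next
  assume K: "\<forall>A\<in>PCMs. \<forall>B\<in>PCMs. R A B \<longleftrightarrow> koczkodaj_ranking A B"
  have Kt: "t1 > 0 \<Longrightarrow> t2 > 0 \<Longrightarrow> t3 > 0 \<Longrightarrow> s1 > 0 \<Longrightarrow> s2 > 0 \<Longrightarrow> s3 > 0 \<Longrightarrow>
     R (triad t1 t2 t3) (triad s1 s2 s3) \<longleftrightarrow> kocz_mu (triad t1 t2 t3) \<le> kocz_mu (triad s1 s2 s3)"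
    for t1 t2 t3 s1 s2 s3 :: real
    using K triad_pcm unfolding koczkodaj_ranking_def by blast
  have Ki: "t1 > 0 \<Longrightarrow> t2 > 0 \<Longrightarrow> t3 > 0 \<Longrightarrow> s1 > 0 \<Longrightarrow> s2 > 0 \<Longrightarrow> s3 > 0 \<Longrightarrow>
     kocz_mu (triad t1 t2 t3) = kocz_mu (triad s1 s2 s3) \<Longrightarrow> indiff R (triad t1 t2 t3) (triad s1 s2 s3)"
    for t1 t2 t3 s1 s2 s3 :: real
    using Kt[of t1 t2 t3 s1 s2 s3] Kt[of s1 s2 s3 t1 t2 t3] unfolding indiff_def by simp
  have "prop_PR R" unfolding prop_PR_def
  proof (intro allI impI)
    fix s2 t2 :: real assume "s2 \<ge> 1" "t2 \<ge> 1"
    moreover have "1/s2 \<le> t2" using \<open>s2 \<ge> 1\<close> \<open>t2 \<ge> 1\<close> by (meson divide_le_eq_1 le_less_trans less_le_not_le linear order_trans zero_less_one)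
    ultimately show "R (triad 1 s2 1) (triad 1 t2 1) \<longleftrightarrow> s2 \<le> t2"
      using Kt[of 1 s2 1 1 t2 1] maxinv[of s2] maxinv[of t2] by (simp add: mu_triad max.commute)
  qed
  moreover have "prop_IIP R" unfolding prop_IIP_def
  proof (intro allI impI)
    fix t1 t2 t3 :: real assume p: "t1 > 0" "t2 > 0" "t3 > 0"
    have "kocz_mu (triad t1 t2 t3) = kocz_mu (triad (1/t1) (1/t2) (1/t3))"
      unfolding mu_triad using p by (simp add: field_simps max.commute)
    then show "indiff R (triad t1 t2 t3) (triad (1/t1) (1/t2) (1/t3))" using Ki p by simp
  qed
  moreover have "prop_HTE R" unfolding prop_HTE_def
  proof (intro allI impI)
    fix t2 t3 :: real assume p: "t2 > 0" "t3 > 0"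
    have "kocz_mu (triad 1 t2 t3) = kocz_mu (triad 1 (t2/t3) 1)"
      unfolding mu_triad using p by (simp add: field_simps)
    then show "indiff R (triad 1 t2 t3) (triad 1 (t2/t3) 1)" using Ki p by simp
  qed
  moreover have "prop_SI R" unfolding prop_SI_def
  proof (intro allI impI)
    fix t1 t2 t3 k :: real assume p: "t1 > 0" "t2 > 0" "t3 > 0" "k > 0"
    have "kocz_mu (triad t1 t2 t3) = kocz_mu (triad (k*t1) (k^2*t2) (k*t3))"
      unfolding mu_triad using p by (simp add: field_simps power2_eq_square)
    then show "indiff R (triad t1 t2 t3) (triad (k*t1) (k^2*t2) (k*t3))" using Ki p by simp
  qed
  moreover have "prop_MON R" unfolding prop_MON_def
  proof (intro ballI allI impI)
    fix A T assume A: "A \<in> PCMs" and T: "is_triad_of T A"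
    have "T \<in> PCMs" using triad_of_props[OF A T] by blast
    then show "R T A" using K A K_MON[OF A T] unfolding koczkodaj_ranking_def by blast
  qed
  moreover have "prop_RED R" unfolding prop_RED_def
  proof (intro ballI)
    fix A assume A: "A \<in> PCMs"
    obtain T where T: "is_triad_of T A" "kocz_mu T = kocz_mu A" using K_RED[OF A] by blast
    have "T \<in> PCMs" using triad_of_props[OF A T(1)] by blast
    then have "indiff R A T" using T K A unfolding koczkodaj_ranking_def indiff_def by simp
    then show "\<exists>T. is_triad_of T A \<and> indiff R A T" using T(1) by blast
  qed
  ultimately show "prop_PR R \<and> prop_IIP R \<and> prop_HTE R \<and> prop_SI R \<and> prop_MON R \<and> prop_RED R" by blast
qed

end
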